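(* For every fixed positive integer $p$, $$\lim_{d\to\infty}\frac{|B(d,p)\cap\mathbb{P}^d_\circ|}{d^p}=\frac{2^{p-1}}{p!}\quad\text{and}\quad\lim_{d\to\infty}\frac{\kappa(B(d,p)\cap\mathbb{P}^d_\circ)}{d^{p-1}}=\frac{2^{p-1}}{(p-1)!}.$$
   Context: A point of $\mathbb{Z}^d$ is primitive if its coordinates are relatively prime; $\mathbb{P}^d_\circ$ denotes the set of primitive points of $\mathbb{Z}^d$ whose first non-zero coordinate is positive. $B(d,p)=\{x\in\mathbb{R}^d:\|x\|_1\le p\}$. For a finite $\mathcal{X}\subset\mathbb{R}^d$, $\kappa(\mathcal{X})=\max_{1\le i\le d}\sum_{x\in\mathcal{X}}|x_i|$. *)

theory Defs
  imports Complex_Main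
begin

text \<open>Points of Z^d are represented as integer lists of length d.\<close>

definition primitive :: "int list \<Rightarrow> bool" where
  "primitive x \<longleftrightarrow> Gcd (set x) = 1"

definition prim_pts :: "nat \<Rightarrow> int list set" where
  "prim_pts d = {x. length x = d \<and> primitive x \<and> hd (dropWhile (\<lambda>a. a = 0) x) > 0}"

definition l1ball :: "nat \<Rightarrow> nat \<Rightarrow> int list set" where
  "l1ball d p = {x. length x = d \<and> sum_list (map abs x) \<le> int p}"

definition kappa :: "nat \<Rightarrow> int list set \<Rightarrow> int" where
  "kappa d X = Max ((\<lambda>i. \<Sum>x\<in>X. \<bar>x ! i\<bar>) ` {..<d})"

end

theory Submission
  imports Defs
begin


definition nnz :: "int list \<Rightarrow> nat" where "nnz x = length (filter (\<lambda>a. a \<noteq> 0) x)"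
definition posl :: "int list \<Rightarrow> bool" where "posl x \<longleftrightarrow> hd (dropWhile (\<lambda>a. a = 0) x) > 0"
definition reml :: "nat \<Rightarrow> int list \<Rightarrow> int list" where "reml i x = take i x @ drop (Suc i) x"
definition insl :: "nat \<Rightarrow> int \<Rightarrow> int list \<Rightarrow> int list" where "insl i a y = take i y @ a # drop i y"
definition W :: "nat \<Rightarrow> nat \<Rightarrow> int list set" where
  "W d q = {x. length x = d \<and> set x \<subseteq> {-1,0,1} \<and> sum_list (map abs x) = int q}"
definition G :: "nat \<Rightarrow> nat \<Rightarrow> nat \<Rightarrow> int list set" where
  "G p d k = {x. length x = d \<and> set x \<subseteq> {-int p..int p} \<and> nnz x \<le> k}"

lemma insl_nth: "i \<le> length y \<Longrightarrow> insl i a y ! i = a"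
  by (simp add: insl_def nth_append)
lemma reml_insl: "i \<le> length y \<Longrightarrow> reml i (insl i a y) = y"
  by (simp add: insl_def reml_def)
lemma insl_reml: "i < length x \<Longrightarrow> insl i (x!i) (reml i x) = x"
proof -
  assume a: "i < length x"
  have "take i (take i x @ drop (Suc i) x) = take i x" using a by simp
  moreover have "drop i (take i x @ drop (Suc i) x) = drop (Suc i) x" using a by simp
  ultimately have "insl i (x!i) (reml i x) = take i x @ x!i # drop (Suc i) x"
    unfolding insl_def reml_def by metis
  then show ?thesis using id_take_nth_drop[OF a] by simp
qed
lemma length_insl: "i \<le> length y \<Longrightarrow> length (insl i a y) = Suc (length y)"
  by (simp add: insl_def)
lemma length_reml: "i < length x \<Longrightarrow> length (reml i x) = length x - 1"
  by (simp add: reml_def)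
lemma set_insl: "set (insl i a y) = insert a (set y)"
proof -
  have "set y = set (take i y) \<union> set (drop i y)" by (metis append_take_drop_id set_append)
  then show ?thesis by (auto simp: insl_def)
qed
lemma sum_insl: "sum_list (map abs (insl i a y)) = \<bar>a\<bar> + sum_list (map abs y)"
proof -
  have "sum_list (map abs y) = sum_list (map abs (take i y)) + sum_list (map abs (drop i y))"
    by (metis append_take_drop_id map_append sum_list_append)
  then show ?thesis by (simp add: insl_def)
qed
lemma nnz_insl: "nnz (insl i a y) = (if a = 0 then 0 else 1) + nnz y"
proof -
  have "nnz y = nnz (take i y) + nnz (drop i y)"
    unfolding nnz_def by (metis append_take_drop_id filter_append length_append)
  then show ?thesis by (simp add: insl_def nnz_def)
qed

lemma split_x:
  assumes "i < length x"
  shows "set x = insert (x!i) (set (reml i x))"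
    "sum_list (map abs x) = \<bar>x!i\<bar> + sum_list (map abs (reml i x))"
    "nnz x = (if x!i = 0 then 0 else 1) + nnz (reml i x)"
  using set_insl[of i "x!i" "reml i x"] sum_insl[of i "x!i" "reml i x"]
    nnz_insl[of i "x!i" "reml i x"] insl_reml[OF assms] by auto

lemma card_split:
  assumes "i \<le> d"
  shows "card {x. length x = Suc d \<and> Q (x!i) (reml i x)} = card {(a,y). length y = d \<and> Q a y}"
proof -
  let ?A = "{x. length x = Suc d \<and> Q (x!i) (reml i x)}"
  have inj: "inj_on (\<lambda>x. (x!i, reml i x)) ?A"
  proof (rule inj_onI)
    fix x y assume x: "x \<in> ?A" and y: "y \<in> ?A" and e: "(x!i, reml i x) = (y!i, reml i y)"
    have "i < length x" "i < length y" using x y assms by auto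
    then have "x = insl i (x!i) (reml i x)" "y = insl i (y!i) (reml i y)" by (simp_all add: insl_reml)
    then show "x = y" using e by simp
  qed
  have "(\<lambda>x. (x!i, reml i x)) ` ?A = {(a,y). length y = d \<and> Q a y}"
  proof (rule set_eqI, rule iffI)
    fix z assume "z \<in> (\<lambda>x. (x!i, reml i x)) ` ?A"
    then show "z \<in> {(a,y). length y = d \<and> Q a y}" using assms by (auto simp: length_reml)
  next
    fix z assume z: "z \<in> {(a,y). length y = d \<and> Q a y}"
    then obtain a y where zz: "z = (a,y)" "length y = d" "Q a y" by auto
    have "insl i a y \<in> ?A" using zz assms by (simp add: length_insl insl_nth reml_insl)
    moreover have "z = (insl i a y ! i, reml i (insl i a y))" using zz assms by (simp add: insl_nth reml_insl)
    ultimately show "z \<in> (\<lambda>x. (x!i, reml i x)) ` ?A" by blast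
  qed
  then show ?thesis using card_image[OF inj] by simp
qed


lemma posl_neg: "\<exists>a\<in>set x. a \<noteq> 0 \<Longrightarrow> posl (map uminus x) \<longleftrightarrow> \<not> posl x"
proof (induction x)
  case Nil then show ?case by simp
next
  case (Cons a xs)
  show ?case
  proof (cases "a = 0")
    case True
    then have "\<exists>a\<in>set xs. a \<noteq> 0" using Cons.prems by auto
    then show ?thesis using Cons.IH True by (simp add: posl_def)
  next
    case False
    then show ?thesis by (auto simp: posl_def)
  qed
qed

lemma card_sym:
  assumes fin: "finite A" and cl: "\<And>x. x \<in> A \<Longrightarrow> map uminus x \<in> A"
    and nz: "\<And>x. x \<in> A \<Longrightarrow> \<exists>a\<in>set x. a \<noteq> 0"
  shows "card A = 2 * card {x\<in>A. posl x}"
proof -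
  let ?P = "{x\<in>A. posl x}" and ?N = "{x\<in>A. \<not> posl x}"
  have inv: "map uminus (map uminus x) = x" for x :: "int list" by (simp add: o_def)
  have inj: "inj_on (map uminus) ?P" by (metis inj_onI inv)
  have img: "map uminus ` ?P = ?N"
  proof (rule set_eqI, rule iffI)
    fix y assume "y \<in> map uminus ` ?P"
    then obtain x where "x \<in> ?P" "y = map uminus x" by auto
    then show "y \<in> ?N" using cl nz posl_neg by auto
  next
    fix y assume y: "y \<in> ?N"
    then have "map uminus y \<in> ?P" using cl nz posl_neg by auto
    then show "y \<in> map uminus ` ?P" using inv by (metis image_eqI)
  qed
  have "A = ?P \<union> ?N" by auto
  then have "card A = card ?P + card ?N" using fin by (metis (no_types, lifting) card_Un_disjoint disjoint_iff finite_Un mem_Collect_eq)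
  then show ?thesis using card_image[OF inj] img by simp
qed

lemma abs_sum_nonneg: "0 \<le> sum_list (map abs (x::int list))"
  by (induction x) auto

lemma elem_le_sum: "a \<in> set x \<Longrightarrow> \<bar>a\<bar> \<le> sum_list (map abs (x::int list))"
  by (induction x) (auto simp: abs_sum_nonneg add_increasing add_increasing2)

lemma sum_zero_iff: "sum_list (map abs (x::int list)) = 0 \<longleftrightarrow> (\<forall>a\<in>set x. a = 0)"
  by (induction x) (auto simp: abs_sum_nonneg add_nonneg_eq_0_iff)

lemma nnz_le_sum: "int (nnz x) \<le> sum_list (map abs x)"
  by (induction x) (auto simp: nnz_def)

lemma nnz_eq_sum: "int (nnz x) = sum_list (map abs x) \<Longrightarrow> set x \<subseteq> {-1,0,1}"
proof (induction x)
  case Nil then show ?case by simp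
next
  case (Cons a xs)
  have h: "int (nnz xs) \<le> sum_list (map abs xs)" by (rule nnz_le_sum)
  have "int (nnz (a # xs)) = (if a = 0 then 0 else 1) + int (nnz xs)" by (simp add: nnz_def)
  then have e: "(if a = 0 then 0 else 1) + int (nnz xs) = \<bar>a\<bar> + sum_list (map abs xs)" using Cons.prems by simp
  then have "int (nnz xs) = sum_list (map abs xs)" using h by (auto split: if_splits)
  then have "set xs \<subseteq> {-1,0,1}" by (rule Cons.IH)
  moreover have "a \<in> {-1,0,1}" using e h by (auto split: if_splits)
  ultimately show ?case by simp
qed

lemma W_fin: "finite (W d q)"
proof -
  have "W d q \<subseteq> {xs. set xs \<subseteq> {-1,0,1} \<and> length xs = d}" by (auto simp: W_def)
  then show ?thesis using finite_lists_length_eq[of "{-1,0,1::int}" d] finite_subset by blast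
qed

lemma G_fin: "finite (G p d k)"
proof -
  have "G p d k \<subseteq> {xs. set xs \<subseteq> {-int p..int p} \<and> length xs = d}" by (auto simp: G_def)
  then show ?thesis using finite_lists_length_eq[of "{-int p..int p}" d] finite_subset by blast
qed

lemma W_neg: "x \<in> W d q \<Longrightarrow> map uminus x \<in> W d q"
  by (auto simp: W_def o_def)

lemma W_nz: "q \<ge> 1 \<Longrightarrow> x \<in> W d q \<Longrightarrow> \<exists>a\<in>set x. a \<noteq> 0"
  using sum_zero_iff[of x] by (auto simp: W_def)

lemma W_zero_iff:
  assumes "length x = Suc d" "i \<le> d"
  shows "(x \<in> W (Suc d) q \<and> x!i = 0) \<longleftrightarrow> (x!i = 0 \<and> reml i x \<in> W d q)"
proof -
  have il: "i < length x" using assms by simp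
  show ?thesis using split_x[OF il] length_reml[OF il] assms by (auto simp: W_def)
qed

lemma W_nonzero_iff:
  assumes "length x = Suc d" "i \<le> d"
  shows "(x \<in> W (Suc d) (Suc q) \<and> x!i \<noteq> 0) \<longleftrightarrow> (x!i \<in> {-1,1} \<and> reml i x \<in> W d q)"
proof -
  have il: "i < length x" using assms by simp
  show ?thesis using split_x[OF il] length_reml[OF il] assms by (auto simp: W_def)
qed

lemma W_Suc0: "x \<in> W (Suc d) 0 \<Longrightarrow> i \<le> d \<Longrightarrow> x!i = 0"
  using sum_zero_iff[of x] nth_mem[of i x] by (auto simp: W_def)

lemma card_W_zero: "i \<le> d \<Longrightarrow> card {x \<in> W (Suc d) q. x!i = 0} = card (W d q)"
proof -
  assume i: "i \<le> d"
  have "{x \<in> W (Suc d) q. x!i = 0} = {x. length x = Suc d \<and> (x!i = 0 \<and> reml i x \<in> W d q)}"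
    using W_zero_iff[OF _ i] by (auto simp: W_def)
  also have "card \<dots> = card {(a::int,y). length y = d \<and> (a = 0 \<and> y \<in> W d q)}"
    using card_split[OF i, where Q="\<lambda>a y. a = 0 \<and> y \<in> W d q"] by simp
  also have "{(a::int,y). length y = d \<and> (a = 0 \<and> y \<in> W d q)} = {0} \<times> W d q"
    by (auto simp: W_def)
  finally show ?thesis by (simp add: card_cartesian_product)
qed

lemma card_W_nonzero: "i \<le> d \<Longrightarrow> card {x \<in> W (Suc d) (Suc q). x!i \<noteq> 0} = 2 * card (W d q)"
proof -
  assume i: "i \<le> d"
  have "{x \<in> W (Suc d) (Suc q). x!i \<noteq> 0} = {x. length x = Suc d \<and> (x!i \<in> {-1,1} \<and> reml i x \<in> W d q)}"
    using W_nonzero_iff[OF _ i] by (auto simp: W_def)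
  also have "card \<dots> = card {(a::int,y). length y = d \<and> (a \<in> {-1,1} \<and> y \<in> W d q)}"
    using card_split[OF i, where Q="\<lambda>a y. a \<in> {-1,1} \<and> y \<in> W d q"] by simp
  also have "{(a::int,y). length y = d \<and> (a \<in> {-1,1} \<and> y \<in> W d q)} = {-1,1::int} \<times> W d q"
    by (auto simp: W_def)
  finally show ?thesis by (simp add: card_cartesian_product)
qed

lemma card_W: "card (W d q) = 2 ^ q * (d choose q)"
proof (induction d arbitrary: q)
  case 0
  have "W 0 q = (if q = 0 then {[]} else {})" by (auto simp: W_def)
  then show ?case by simp
next
  case (Suc d)
  have fin: "finite (W (Suc d) q)" by (rule W_fin)
  have split: "W (Suc d) q = {x \<in> W (Suc d) q. x!0 = 0} \<union> {x \<in> W (Suc d) q. x!0 \<noteq> 0}" by auto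
  have "card (W (Suc d) q) = card {x \<in> W (Suc d) q. x!0 = 0} + card {x \<in> W (Suc d) q. x!0 \<noteq> 0}"
    by (subst split, rule card_Un_disjoint) (use fin in auto)
  then have e: "card (W (Suc d) q) = card (W d q) + card {x \<in> W (Suc d) q. x!0 \<noteq> 0}"
    using card_W_zero[of 0 d q] by simp
  show ?case
  proof (cases q)
    case 0
    then have "{x \<in> W (Suc d) q. x!0 \<noteq> 0} = {}" using W_Suc0 by auto
    then have "card {x \<in> W (Suc d) q. x!0 \<noteq> 0} = 0" by (metis card.empty)
    then show ?thesis using e Suc.IH 0 by simp
  next
    case (Suc q')
    then show ?thesis using e Suc.IH card_W_nonzero[of 0 d q'] by (simp add: algebra_simps)
  qed
qed


lemma Gcd_one: "set x \<subseteq> {-1,0,1::int} \<Longrightarrow> \<exists>a\<in>set x. a \<noteq> 0 \<Longrightarrow> Gcd (set x) = 1"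
proof -
  assume s: "set x \<subseteq> {-1,0,1::int}" and "\<exists>a\<in>set x. a \<noteq> 0"
  then obtain a where a: "a \<in> set x" "a \<noteq> 0" by blast
  then have "a = 1 \<or> a = -1" using s by auto
  moreover have "Gcd (set x) dvd a" using a Gcd_dvd by blast
  ultimately have "Gcd (set x) dvd 1" by auto
  then have "is_unit (Gcd (set x))" by simp
  then show ?thesis by (metis normalize_Gcd is_unit_normalize)
qed

lemma G_zero_iff:
  assumes "length x = Suc d" "i \<le> d"
  shows "(x \<in> G p (Suc d) k \<and> x!i = 0) \<longleftrightarrow> (x!i = 0 \<and> reml i x \<in> G p d k)"
proof -
  have il: "i < length x" using assms by simp
  show ?thesis using split_x[OF il] length_reml[OF il] assms by (auto simp: G_def)
qed

lemma G_nonzero_iff: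
  assumes "length x = Suc d" "i \<le> d"
  shows "(x \<in> G p (Suc d) (Suc k) \<and> x!i \<noteq> 0) \<longleftrightarrow> (x!i \<in> {-int p..int p} - {0} \<and> reml i x \<in> G p d k)"
proof -
  have il: "i < length x" using assms by simp
  show ?thesis using split_x[OF il] length_reml[OF il] assms by (auto simp: G_def)
qed

lemma G_0: "x \<in> G p d 0 \<Longrightarrow> i < d \<Longrightarrow> x!i = 0"
  by (auto simp: G_def nnz_def filter_empty_conv)

lemma card_G_zero: "i \<le> d \<Longrightarrow> card {x \<in> G p (Suc d) k. x!i = 0} = card (G p d k)"
proof -
  assume i: "i \<le> d"
  have "{x \<in> G p (Suc d) k. x!i = 0} = {x. length x = Suc d \<and> (x!i = 0 \<and> reml i x \<in> G p d k)}"
  proof (rule set_eqI)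
    fix x
    show "x \<in> {x \<in> G p (Suc d) k. x!i = 0} \<longleftrightarrow> x \<in> {x. length x = Suc d \<and> (x!i = 0 \<and> reml i x \<in> G p d k)}"
    proof (cases "length x = Suc d")
      case True then show ?thesis using G_zero_iff[OF True i, of p] by simp
    next
      case False then show ?thesis by (simp add: G_def)
    qed
  qed
  also have "card \<dots> = card {(a::int,y). length y = d \<and> (a = 0 \<and> y \<in> G p d k)}"
    using card_split[OF i, where Q="\<lambda>a y. a = 0 \<and> y \<in> G p d k"] by simp
  also have "{(a::int,y). length y = d \<and> (a = 0 \<and> y \<in> G p d k)} = {0} \<times> G p d k"
    by (auto simp: G_def)
  finally show ?thesis by (simp add: card_cartesian_product)
qed

lemma card_G_nonzero: "i \<le> d \<Longrightarrow> card {x \<in> G p (Suc d) (Suc k). x!i \<noteq> 0} = 2 * p * card (G p d k)"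
proof -
  assume i: "i \<le> d"
  have "{x \<in> G p (Suc d) (Suc k). x!i \<noteq> 0} = {x. length x = Suc d \<and> (x!i \<in> {-int p..int p} - {0} \<and> reml i x \<in> G p d k)}"
  proof (rule set_eqI)
    fix x
    show "x \<in> {x \<in> G p (Suc d) (Suc k). x!i \<noteq> 0} \<longleftrightarrow> x \<in> {x. length x = Suc d \<and> (x!i \<in> {-int p..int p} - {0} \<and> reml i x \<in> G p d k)}"
    proof (cases "length x = Suc d")
      case True then show ?thesis using G_nonzero_iff[OF True i, of p] by simp
    next
      case False then show ?thesis by (simp add: G_def)
    qed
  qed
  also have "card \<dots> = card {(a::int,y). length y = d \<and> (a \<in> {-int p..int p} - {0} \<and> y \<in> G p d k)}"
    using card_split[OF i, where Q="\<lambda>a y. a \<in> {-int p..int p} - {0} \<and> y \<in> G p d k"] by simp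
  also have "{(a::int,y). length y = d \<and> (a \<in> {-int p..int p} - {0} \<and> y \<in> G p d k)} = ({-int p..int p} - {0}) \<times> G p d k"
    by (auto simp: G_def)
  finally have "card {x \<in> G p (Suc d) (Suc k). x!i \<noteq> 0} = card ({-int p..int p} - {0}) * card (G p d k)"
    by (simp add: card_cartesian_product)
  moreover have "card ({-int p..int p} - {0}) = 2 * p" by (simp add: card_Diff_singleton)
  ultimately show ?thesis by simp
qed

lemma arith_helper:
  fixes M n k c :: nat
  assumes "c \<le> M"
  shows "M^(Suc k)*(n+1)^(Suc k) + c * (M^k*(n+1)^k) \<le> M^(Suc k)*(n+2)^(Suc k)"
proof -
  have h1: "(n+1)^k \<le> (n+2)^k" by (simp add: power_mono)
  have "(n+1)^(Suc k) + (n+1)^k = (n+2) * (n+1)^k" by simp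
  also have "\<dots> \<le> (n+2) * (n+2)^k" using h1 by (rule mult_le_mono2)
  also have "\<dots> = (n+2)^(Suc k)" by simp
  finally have h2: "(n+1)^(Suc k) + (n+1)^k \<le> (n+2)^(Suc k)" .
  have h3: "c * (M^k*(n+1)^k) \<le> M^(Suc k) * (n+1)^k"
  proof -
    have "c * (M^k*(n+1)^k) \<le> M * (M^k*(n+1)^k)" using assms by (rule mult_le_mono1)
    then show ?thesis by (simp add: mult.assoc)
  qed
  have "M^(Suc k)*(n+1)^(Suc k) + c * (M^k*(n+1)^k) \<le> M^(Suc k)*(n+1)^(Suc k) + M^(Suc k) * (n+1)^k"
    using h3 by (rule add_left_mono)
  also have "\<dots> = M^(Suc k) * ((n+1)^(Suc k) + (n+1)^k)" by (simp only: add_mult_distrib2)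
  also have "\<dots> \<le> M^(Suc k)*(n+2)^(Suc k)" using h2 by (rule mult_le_mono2)
  finally show ?thesis .
qed

lemma card_G_bound: "card (G p d k) \<le> (2*p+1)^k * (d+1)^k"
proof (induction d arbitrary: k)
  case 0
  have "G p 0 k \<subseteq> {[]}" by (auto simp: G_def)
  then have "card (G p 0 k) \<le> card {[]::int list}" by (rule card_mono[rotated]) simp
  then have a: "card (G p 0 k) \<le> 1" by simp
  have b: "(1::nat) \<le> (2*p+1)^k * (0+1)^k" by simp
  show ?case by (rule le_trans[OF a b])
next
  case (Suc d)
  have split: "G p (Suc d) k = {x \<in> G p (Suc d) k. x!0 = 0} \<union> {x \<in> G p (Suc d) k. x!0 \<noteq> 0}" by auto
  have "card (G p (Suc d) k) \<le> card {x \<in> G p (Suc d) k. x!0 = 0} + card {x \<in> G p (Suc d) k. x!0 \<noteq> 0}"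
    by (subst split, rule card_Un_le)
  then have e: "card (G p (Suc d) k) \<le> card (G p d k) + card {x \<in> G p (Suc d) k. x!0 \<noteq> 0}"
    using card_G_zero[of 0 d p k] by simp
  show ?case
  proof (cases k)
    case 0
    then have "{x \<in> G p (Suc d) k. x!0 \<noteq> 0} = {}" using G_0 by auto
    then have "card {x \<in> G p (Suc d) k. x!0 \<noteq> 0} = 0" by (metis card.empty)
    then show ?thesis using e Suc.IH[of k] 0 by simp
  next
    case (Suc k')
    have c1: "card {x \<in> G p (Suc d) k. x!0 \<noteq> 0} = 2*p * card (G p d k')"
      using card_G_nonzero[of 0 d p k'] Suc by simp
    have c2: "2*p * card (G p d k') \<le> 2*p * ((2*p+1)^k' * (d+1)^k')"
      using Suc.IH[of k'] by (rule mult_le_mono2)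
    have "card (G p (Suc d) k) \<le> (2*p+1)^k * (d+1)^k + 2*p * ((2*p+1)^k' * (d+1)^k')"
      using e Suc.IH[of k] c1 c2 by linarith
    also have "\<dots> \<le> (2*p+1)^k * (d+2)^k" using arith_helper[of "2*p" "2*p+1" k' d] Suc by simp
    finally show ?thesis by simp
  qed
qed


lemma card_S: "p \<ge> 1 \<Longrightarrow> card {x\<in>W d p. posl x} = 2^(p-1) * (d choose p)"
proof -
  assume p: "p \<ge> 1"
  have "card (W d p) = 2 * card {x\<in>W d p. posl x}"
    by (rule card_sym) (use W_fin W_neg W_nz p in auto)
  moreover have "card (W d p) = 2^p * (d choose p)" by (rule card_W)
  moreover have "(2::nat)^p = 2 * 2^(p-1)" using p by (metis Suc_diff_le diff_Suc_1 power_Suc)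
  ultimately show ?thesis by simp
qed

lemma card_Si: "p \<ge> 1 \<Longrightarrow> i < d \<Longrightarrow> card {x\<in>W d p. x!i \<noteq> 0 \<and> posl x} = 2^(p-1) * ((d-1) choose (p-1))"
proof -
  assume p: "p \<ge> 1" and i: "i < d"
  obtain d' where d: "d = Suc d'" using i by (cases d) auto
  obtain p' where pp: "p = Suc p'" using p by (cases p) auto
  let ?A = "{x\<in>W d p. x!i \<noteq> 0}"
  have fin: "finite ?A" using W_fin by auto
  have cl: "map uminus x \<in> ?A" if "x \<in> ?A" for x
  proof -
    have "map uminus x \<in> W d p" using that W_neg[of x d p] by auto
    moreover have "i < length x" using that i by (auto simp: W_def)
    ultimately show ?thesis using that by simp
  qed
  have nz: "\<exists>a\<in>set x. a \<noteq> 0" if "x \<in> ?A" for x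
    using that nth_mem[of i x] i by (auto simp: W_def)
  have "card ?A = 2 * card {x\<in>?A. posl x}" by (rule card_sym[OF fin cl nz])
  moreover have "card ?A = 2 * card (W d' p')" using card_W_nonzero[of i d' p'] d pp i by simp
  moreover have "{x\<in>?A. posl x} = {x\<in>W d p. x!i \<noteq> 0 \<and> posl x}" by auto
  ultimately show ?thesis using card_W[of d' p'] d pp by simp
qed

lemma F1: "p \<ge> 1 \<Longrightarrow> {x\<in>W d p. posl x} \<subseteq> l1ball d p \<inter> prim_pts d"
proof
  fix x assume p: "p \<ge> 1" and x: "x \<in> {x\<in>W d p. posl x}"
  then have w: "length x = d" "set x \<subseteq> {-1,0,1}" "sum_list (map abs x) = int p" "posl x"
    by (auto simp: W_def)
  have "\<exists>a\<in>set x. a \<noteq> 0" using W_nz p x by auto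
  then have "Gcd (set x) = 1" using Gcd_one w by blast
  then show "x \<in> l1ball d p \<inter> prim_pts d"
    using w by (simp add: l1ball_def prim_pts_def primitive_def posl_def)
qed

lemma F2: "l1ball d p \<inter> prim_pts d \<subseteq> {x\<in>W d p. posl x} \<union> G p d (p-1)"
proof
  fix x assume x: "x \<in> l1ball d p \<inter> prim_pts d"
  then have l: "length x = d" and s: "sum_list (map abs x) \<le> int p" and ps: "posl x"
    by (auto simp: l1ball_def prim_pts_def posl_def)
  show "x \<in> {x\<in>W d p. posl x} \<union> G p d (p-1)"
  proof (cases "x \<in> W d p")
    case True then show ?thesis using ps by simp
  next
    case False
    have "set x \<subseteq> {-int p..int p}"
    proof
      fix a assume "a \<in> set x"
      then have "\<bar>a\<bar> \<le> int p" using elem_le_sum[of a x] s by simp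
      then show "a \<in> {-int p..int p}" by auto
    qed
    moreover have "nnz x \<le> p - 1"
    proof -
      have n: "int (nnz x) \<le> sum_list (map abs x)" by (rule nnz_le_sum)
      have "int (nnz x) \<noteq> int p"
      proof
        assume e: "int (nnz x) = int p"
        then have "sum_list (map abs x) = int p" using n s by simp
        moreover have "set x \<subseteq> {-1,0,1}" using nnz_eq_sum[of x] e n s by simp
        ultimately show False using False l by (simp add: W_def)
      qed
      then show ?thesis using n s by simp
    qed
    ultimately show ?thesis using l by (simp add: G_def)
  qed
qed

lemma finF: "finite (l1ball d p \<inter> prim_pts d)"
proof (rule finite_subset[OF F2])
  show "finite ({x\<in>W d p. posl x} \<union> G p d (p-1))" using W_fin G_fin by simp
qed

lemma count_bounds:
  assumes "p \<ge> 1"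
  shows "2^(p-1)*(d choose p) \<le> card (l1ball d p \<inter> prim_pts d)"
    "card (l1ball d p \<inter> prim_pts d) \<le> 2^(p-1)*(d choose p) + (2*p+1)^(p-1)*(d+1)^(p-1)"
proof -
  show "2^(p-1)*(d choose p) \<le> card (l1ball d p \<inter> prim_pts d)"
    using card_mono[OF finF F1[OF assms]] card_S[OF assms] by simp
  have "card (l1ball d p \<inter> prim_pts d) \<le> card ({x\<in>W d p. posl x} \<union> G p d (p-1))"
    by (rule card_mono[OF _ F2]) (use W_fin G_fin in auto)
  also have "\<dots> \<le> card {x\<in>W d p. posl x} + card (G p d (p-1))" by (rule card_Un_le)
  finally show "card (l1ball d p \<inter> prim_pts d) \<le> 2^(p-1)*(d choose p) + (2*p+1)^(p-1)*(d+1)^(p-1)"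
    using card_S[OF assms] card_G_bound[of p d "p-1"] by simp
qed


lemma sum_Un_le_nonneg:
  fixes f :: "'a \<Rightarrow> int"
  assumes "finite A" "finite B" "\<And>x. f x \<ge> 0"
  shows "sum f (A \<union> B) \<le> sum f A + sum f B"
proof -
  have "sum f (A \<union> B) = sum f A + sum f B - sum f (A \<inter> B)" by (rule sum_Un[OF assms(1,2)])
  moreover have "sum f (A \<inter> B) \<ge> 0" using assms(3) by (simp add: sum_nonneg)
  ultimately show ?thesis by simp
qed

lemma Gi_bound:
  assumes "p \<ge> 1" "i < Suc d'"
  shows "card {x \<in> G p (Suc d') (p-1). x!i \<noteq> 0} \<le> (if p = 1 then 0 else 2*p*(2*p+1)^(p-2)*(d'+1)^(p-2))"
proof (cases "p = 1")
  case True
  have e: "{x \<in> G p (Suc d') (p-1). x!i \<noteq> 0} = {}"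
  proof (rule equals0I)
    fix x assume x: "x \<in> {x \<in> G p (Suc d') (p-1). x!i \<noteq> 0}"
    then have "x \<in> G p (Suc d') 0" "x!i \<noteq> 0" using True by auto
    then show False using G_0 assms(2) by blast
  qed
  have c: "card {x \<in> G p (Suc d') (p-1). x!i \<noteq> 0} = 0" unfolding e by (rule card.empty)
  show ?thesis unfolding c using True by simp
next
  case False
  obtain k where k: "p = Suc (Suc k)" using False assms by (metis One_nat_def Suc_pred' less_one linorder_neqE_nat not_le not0_implies_Suc)
  have i: "i \<le> d'" using assms(2) by simp
  have "card {x \<in> G p (Suc d') (Suc k). x!i \<noteq> 0} = 2*p*card (G p d' k)"
    by (rule card_G_nonzero[OF i])
  also have "\<dots> \<le> 2*p*((2*p+1)^k*(d'+1)^k)" using card_G_bound[of p d' k] by simp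
  finally have "card {x \<in> G p (Suc d') (Suc k). x!i \<noteq> 0} \<le> 2*p*((2*p+1)^k*(d'+1)^k)" .
  moreover have "p - 1 = Suc k" "p - 2 = k" using k by simp_all
  ultimately show ?thesis using False by (simp add: mult.assoc)
qed

lemma colsum_upper:
  assumes p: "p \<ge> 1" and i: "i < Suc d'"
  shows "(\<Sum>x\<in>l1ball (Suc d') p \<inter> prim_pts (Suc d'). \<bar>x!i\<bar>) \<le>
     int (2^(p-1)*(d' choose (p-1))) + int p * int (if p = 1 then 0 else 2*p*(2*p+1)^(p-2)*(d'+1)^(p-2))"
proof -
  let ?d = "Suc d'"
  let ?F = "l1ball ?d p \<inter> prim_pts ?d"
  let ?S = "{x\<in>W ?d p. posl x}" and ?G = "G p ?d (p-1)"
  have "(\<Sum>x\<in>?F. \<bar>x!i\<bar>) \<le> (\<Sum>x\<in>?S \<union> ?G. \<bar>x!i\<bar>)"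
    by (rule sum_mono2) (use W_fin G_fin F2 in auto)
  also have "\<dots> \<le> (\<Sum>x\<in>?S. \<bar>x!i\<bar>) + (\<Sum>x\<in>?G. \<bar>x!i\<bar>)"
    by (rule sum_Un_le_nonneg) (use W_fin G_fin in auto)
  also have "(\<Sum>x\<in>?S. \<bar>x!i\<bar>) = int (2^(p-1)*(d' choose (p-1)))"
  proof -
    have "(\<Sum>x\<in>?S. \<bar>x!i\<bar>) = (\<Sum>x\<in>?S. if x!i \<noteq> 0 then 1 else 0)"
    proof (rule sum.cong)
      fix x assume x: "x \<in> ?S"
      then have "i < length x" using i by (simp add: W_def)
      then have m: "x!i \<in> set x" by (rule nth_mem)
      have ss: "set x \<subseteq> {-1,0,1}" using x by (simp add: W_def)
      have "x!i \<in> {-1,0,1}" using subsetD[OF ss m] .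
      then show "\<bar>x!i\<bar> = (if x!i \<noteq> 0 then 1 else 0)" by auto
    qed simp
    also have "\<dots> = (\<Sum>x\<in>{x\<in>?S. x!i \<noteq> 0}. 1)" by (rule sum.inter_filter[symmetric]) (use W_fin in auto)
    also have "{x\<in>?S. x!i \<noteq> 0} = {x\<in>W ?d p. x!i \<noteq> 0 \<and> posl x}" by blast
    also have "(\<Sum>x\<in>{x\<in>W ?d p. x!i \<noteq> 0 \<and> posl x}. (1::int)) = int (card {x\<in>W ?d p. x!i \<noteq> 0 \<and> posl x})"
      by simp
    also have "\<dots> = int (2^(p-1)*(d' choose (p-1)))" using card_Si[OF p i] by simp
    finally show ?thesis .
  qed
  also have "(\<Sum>x\<in>?G. \<bar>x!i\<bar>) \<le> int p * int (if p = 1 then 0 else 2*p*(2*p+1)^(p-2)*(d'+1)^(p-2))"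
  proof -
    have "(\<Sum>x\<in>?G. \<bar>x!i\<bar>) = (\<Sum>x\<in>?G. if x!i \<noteq> 0 then \<bar>x!i\<bar> else 0)"
      by (rule sum.cong) auto
    also have "\<dots> = (\<Sum>x\<in>{x\<in>?G. x!i \<noteq> 0}. \<bar>x!i\<bar>)" by (rule sum.inter_filter[symmetric]) (use G_fin in auto)
    also have "\<dots> \<le> of_nat (card {x\<in>?G. x!i \<noteq> 0}) * int p"
    proof (rule sum_bounded_above)
      fix x assume x: "x \<in> {x\<in>?G. x!i \<noteq> 0}"
      then have "i < length x" using i by (simp add: G_def)
      then have m: "x!i \<in> set x" by (rule nth_mem)
      have ss: "set x \<subseteq> {-int p..int p}" using x by (simp add: G_def)
      have "x!i \<in> {-int p..int p}" using subsetD[OF ss m] .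
      then show "\<bar>x!i\<bar> \<le> int p" by auto
    qed
    also have "\<dots> \<le> int (if p = 1 then 0 else 2*p*(2*p+1)^(p-2)*(d'+1)^(p-2)) * int p"
      using Gi_bound[OF p i] by (intro mult_right_mono) auto
    finally show ?thesis by (simp add: mult.commute)
  qed
  finally show ?thesis by simp
qed

lemma colsum_lower:
  assumes p: "p \<ge> 1"
  shows "int (2^(p-1)*(d' choose (p-1))) \<le> (\<Sum>x\<in>l1ball (Suc d') p \<inter> prim_pts (Suc d'). \<bar>x!0\<bar>)"
proof -
  let ?d = "Suc d'"
  let ?F = "l1ball ?d p \<inter> prim_pts ?d"
  let ?S0 = "{x\<in>W ?d p. x!0 \<noteq> 0 \<and> posl x}"
  have sub: "?S0 \<subseteq> ?F" using F1[OF p] by auto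
  have "int (2^(p-1)*(d' choose (p-1))) = int (card ?S0)" using card_Si[OF p, of 0 ?d] by simp
  also have "\<dots> = (\<Sum>x\<in>?S0. \<bar>x!0\<bar>)"
  proof -
    have "(\<Sum>x\<in>?S0. \<bar>x!0\<bar>) = (\<Sum>x\<in>?S0. 1)"
    proof (rule sum.cong)
      fix x assume x: "x \<in> ?S0"
      then have "0 < length x" by (simp add: W_def)
      then have m: "x!0 \<in> set x" by (rule nth_mem)
      have ss: "set x \<subseteq> {-1,0,1}" using x by (simp add: W_def)
      have "x!0 \<in> {-1,0,1}" using subsetD[OF ss m] .
      moreover have "x!0 \<noteq> 0" using x by simp
      ultimately have "x!0 = 1 \<or> x!0 = -1" by auto
      then show "\<bar>x!0\<bar> = 1" by auto
    qed simp
    then show ?thesis by simp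
  qed
  also have "\<dots> \<le> (\<Sum>x\<in>?F. \<bar>x!0\<bar>)"
    by (rule sum_mono2[OF finF sub]) auto
  finally show ?thesis .
qed

lemma kappa_bounds:
  assumes p: "p \<ge> 1"
  shows "int (2^(p-1)*(d' choose (p-1))) \<le> kappa (Suc d') (l1ball (Suc d') p \<inter> prim_pts (Suc d'))"
    "kappa (Suc d') (l1ball (Suc d') p \<inter> prim_pts (Suc d')) \<le>
     int (2^(p-1)*(d' choose (p-1))) + int p * int (if p = 1 then 0 else 2*p*(2*p+1)^(p-2)*(d'+1)^(p-2))"
proof -
  let ?f = "\<lambda>i. \<Sum>x\<in>l1ball (Suc d') p \<inter> prim_pts (Suc d'). \<bar>x!i\<bar>"
  have fin: "finite (?f ` {..<Suc d'})" by simp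
  have ne: "?f ` {..<Suc d'} \<noteq> {}" by auto
  have "?f 0 \<le> Max (?f ` {..<Suc d'})" by (rule Max_ge[OF fin]) simp
  then show "int (2^(p-1)*(d' choose (p-1))) \<le> kappa (Suc d') (l1ball (Suc d') p \<inter> prim_pts (Suc d'))"
    using colsum_lower[OF p, of d'] unfolding kappa_def by linarith
  show "kappa (Suc d') (l1ball (Suc d') p \<inter> prim_pts (Suc d')) \<le>
     int (2^(p-1)*(d' choose (p-1))) + int p * int (if p = 1 then 0 else 2*p*(2*p+1)^(p-2)*(d'+1)^(p-2))"
    unfolding kappa_def using colsum_upper[OF p] by (subst Max_le_iff[OF fin ne]) auto
qed


lemma binom_lim: "(\<lambda>n. real ((n - c) choose k) / real n ^ k) \<longlonglongrightarrow> 1 / fact k"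
proof -
  let ?m = "real (c + k)"
  let ?l = "\<lambda>n. ((real n - ?m) / real n) ^ k / fact k"
  have r1: "(\<lambda>n. (real n - ?m) / real n) \<longlonglongrightarrow> 1"
  proof -
    have "(\<lambda>n. 1 - ?m / real n) \<longlonglongrightarrow> 1 - 0"
      by (intro tendsto_intros)
    moreover have "\<forall>\<^sub>F n in sequentially. 1 - ?m / real n = (real n - ?m) / real n"
      using eventually_gt_at_top[of 0] by eventually_elim (simp add: field_simps)
    ultimately show ?thesis using Lim_transform_eventually by fastforce
  qed
  have l: "?l \<longlonglongrightarrow> 1 ^ k / fact k" by (intro tendsto_intros r1) simp
  have bounds: "?l n \<le> real ((n - c) choose k) / real n ^ k \<and> real ((n - c) choose k) / real n ^ k \<le> 1 / fact k"
    if n: "n \<ge> c + k + 1" for n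
  proof -
    have npos: "real n > 0" using n by simp
    have e: "fact k * real ((n - c) choose k) = (\<Prod>i = 0..<k. real (n - c) - real i)"
      using gbinomial_mult_fact[of k "real (n - c)"] binomial_gbinomial[of "n - c" k, where 'a=real] by simp
    have rc: "real (n - c) = real n - real c" using n by simp
    have lo: "(real n - ?m) ^ k \<le> (\<Prod>i = 0..<k. real (n - c) - real i)"
    proof -
      have "(\<Prod>i = 0..<k. real n - ?m) \<le> (\<Prod>i = 0..<k. real (n - c) - real i)"
        by (rule prod_mono) (use n rc in auto)
      then show ?thesis by simp
    qed
    have hi: "(\<Prod>i = 0..<k. real (n - c) - real i) \<le> real n ^ k"
    proof -
      have "(\<Prod>i = 0..<k. real (n - c) - real i) \<le> (\<Prod>i = 0..<k. real n)"
        by (rule prod_mono) (use n rc in auto)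
      then show ?thesis by simp
    qed
    have fk: "fact k > (0::real)" by simp
    have "?l n = (real n - ?m) ^ k / (fact k * real n ^ k)" by (simp add: power_divide)
    also have "\<dots> \<le> (fact k * real ((n - c) choose k)) / (fact k * real n ^ k)"
      using lo e npos fk by (intro divide_right_mono) auto
    also have "\<dots> = real ((n - c) choose k) / real n ^ k" using fk by simp
    finally have 1: "?l n \<le> real ((n - c) choose k) / real n ^ k" .
    have "real ((n - c) choose k) / real n ^ k = (fact k * real ((n - c) choose k)) / (fact k * real n ^ k)"
      using fk by simp
    also have "\<dots> \<le> real n ^ k / (fact k * real n ^ k)"
      using hi e npos fk by (intro divide_right_mono) auto
    also have "\<dots> = 1 / fact k" using npos by simp
    finally show ?thesis using 1 by simp
  qed
  show ?thesis
  proof (rule tendsto_sandwich[OF _ _ _ tendsto_const])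
    show "\<forall>\<^sub>F n in sequentially. ?l n \<le> real ((n - c) choose k) / real n ^ k"
      using eventually_ge_at_top[of "c+k+1"] by eventually_elim (use bounds in blast)
    show "\<forall>\<^sub>F n in sequentially. real ((n - c) choose k) / real n ^ k \<le> 1 / fact k"
      using eventually_ge_at_top[of "c+k+1"] by eventually_elim (use bounds in blast)
    show "?l \<longlonglongrightarrow> 1 / fact k" using l by simp
  qed
qed

lemma pow_over_lim: "(\<lambda>n. real (n + 1) ^ j / real n ^ Suc j) \<longlonglongrightarrow> 0"
proof -
  have "(\<lambda>n. (1 + 1 / real n) ^ j * (1 / real n)) \<longlonglongrightarrow> (1 + 0) ^ j * 0"
    by (intro tendsto_intros)
  moreover have "\<forall>\<^sub>F n in sequentially. (1 + 1 / real n) ^ j * (1 / real n) = real (n + 1) ^ j / real n ^ Suc j"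
    using eventually_gt_at_top[of 0]
  proof eventually_elim
    case (elim n)
    then have "1 + 1 / real n = real (n + 1) / real n" by (simp add: field_simps)
    then show ?case by (simp add: power_divide)
  qed
  ultimately show ?thesis using Lim_transform_eventually by fastforce
qed


theorem lemma7p3:
  fixes p :: nat
  assumes "p \<ge> 1"
  shows "((\<lambda>d. real (card (l1ball d p \<inter> prim_pts d)) / real d ^ p)
           \<longlonglongrightarrow> 2 ^ (p - 1) / fact p)
         \<and> ((\<lambda>d. real_of_int (kappa d (l1ball d p \<inter> prim_pts d)) / real d ^ (p - 1))
           \<longlonglongrightarrow> 2 ^ (p - 1) / fact (p - 1))"
proof
  have p: "p \<ge> 1" by (rule assms)
  let ?M = "real ((2*p+1)^(p-1))"
  let ?l = "\<lambda>d. 2^(p-1) * (real (d choose p) / real d ^ p)"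
  let ?u = "\<lambda>d. ?l d + ?M * (real (d + 1) ^ (p-1) / real d ^ Suc (p-1))"
  have sp: "Suc (p - 1) = p" using p by simp
  have lL: "?l \<longlonglongrightarrow> 2^(p-1) / fact p"
  proof -
    have "(\<lambda>d. 2^(p-1) * (real ((d - 0) choose p) / real d ^ p)) \<longlonglongrightarrow> 2^(p-1) * (1 / fact p)"
      by (intro tendsto_intros binom_lim)
    then show ?thesis by simp
  qed
  have uL: "?u \<longlonglongrightarrow> 2^(p-1) / fact p"
  proof -
    have "?u \<longlonglongrightarrow> 2^(p-1) / fact p + ?M * 0" by (intro tendsto_intros lL pow_over_lim)
    then show ?thesis by simp
  qed
  show "(\<lambda>d. real (card (l1ball d p \<inter> prim_pts d)) / real d ^ p) \<longlonglongrightarrow> 2 ^ (p - 1) / fact p"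
  proof (rule tendsto_sandwich[OF _ _ lL uL])
    show "\<forall>\<^sub>F d in sequentially. ?l d \<le> real (card (l1ball d p \<inter> prim_pts d)) / real d ^ p"
      using eventually_gt_at_top[of 0]
    proof eventually_elim
      case (elim d)
      have "real (2^(p-1)*(d choose p)) \<le> real (card (l1ball d p \<inter> prim_pts d))"
        using count_bounds(1)[OF p, of d] by linarith
      then show ?case using elim by (simp add: divide_right_mono)
    qed
    show "\<forall>\<^sub>F d in sequentially. real (card (l1ball d p \<inter> prim_pts d)) / real d ^ p \<le> ?u d"
      using eventually_gt_at_top[of 0]
    proof eventually_elim
      case (elim d)
      have "real (card (l1ball d p \<inter> prim_pts d)) \<le> real (2^(p-1)*(d choose p) + (2*p+1)^(p-1)*(d+1)^(p-1))"
        using count_bounds(2)[OF p, of d] by linarith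
      then have "real (card (l1ball d p \<inter> prim_pts d)) / real d ^ p \<le> real (2^(p-1)*(d choose p) + (2*p+1)^(p-1)*(d+1)^(p-1)) / real d ^ p"
        using elim by (simp add: divide_right_mono)
      also have "\<dots> = ?u d" using sp by (simp add: add_divide_distrib)
      finally show ?case .
    qed
  qed
next
  have p: "p \<ge> 1" by (rule assms)
  let ?K = "\<lambda>d. real_of_int (kappa d (l1ball d p \<inter> prim_pts d)) / real d ^ (p - 1)"
  let ?l = "\<lambda>d. 2^(p-1) * (real ((d - 1) choose (p-1)) / real d ^ (p-1))"
  let ?C = "real p * real (2*p*(2*p+1)^(p-2))"
  let ?e = "\<lambda>d. if p = 1 then 0 else ?C * (1 / real d)"
  let ?u = "\<lambda>d. ?l d + ?e d"
  have lL: "?l \<longlonglongrightarrow> 2^(p-1) / fact (p-1)"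
  proof -
    have "?l \<longlonglongrightarrow> 2^(p-1) * (1 / fact (p-1))" by (intro tendsto_intros binom_lim)
    then show ?thesis by simp
  qed
  have eL: "?e \<longlonglongrightarrow> 0"
  proof (cases "p = 1")
    case True then show ?thesis by simp
  next
    case False
    have "(\<lambda>d. ?C * (1 / real d)) \<longlonglongrightarrow> ?C * 0" by (intro tendsto_intros)
    then show ?thesis using False by simp
  qed
  have uL: "?u \<longlonglongrightarrow> 2^(p-1) / fact (p-1)"
  proof -
    have "?u \<longlonglongrightarrow> 2^(p-1) / fact (p-1) + 0" by (intro tendsto_add lL eL)
    then show ?thesis by simp
  qed
  show "?K \<longlonglongrightarrow> 2 ^ (p - 1) / fact (p - 1)"
  proof (rule tendsto_sandwich[OF _ _ lL uL])
    show "\<forall>\<^sub>F d in sequentially. ?l d \<le> ?K d"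
      using eventually_gt_at_top[of 0]
    proof eventually_elim
      case (elim d)
      then obtain d' where d: "d = Suc d'" by (cases d) auto
      have "real (2^(p-1)*(d' choose (p-1))) \<le> real_of_int (kappa d (l1ball d p \<inter> prim_pts d))"
        using kappa_bounds(1)[OF p, of d'] d by (metis of_int_le_iff of_int_of_nat_eq)
      then show ?case using elim d by (simp add: divide_right_mono)
    qed
    show "\<forall>\<^sub>F d in sequentially. ?K d \<le> ?u d"
      using eventually_gt_at_top[of 0]
    proof eventually_elim
      case (elim d)
      then obtain d' where d: "d = Suc d'" by (cases d) auto
      let ?E = "int p * int (if p = 1 then 0 else 2*p*(2*p+1)^(p-2)*(d'+1)^(p-2))"
      have "real_of_int (kappa d (l1ball d p \<inter> prim_pts d)) \<le> real (2^(p-1)*(d' choose (p-1))) + real_of_int ?E"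
        using kappa_bounds(2)[OF p, of d'] d by (metis of_int_add of_int_le_iff of_int_of_nat_eq)
      then have "?K d \<le> (real (2^(p-1)*(d' choose (p-1))) + real_of_int ?E) / real d ^ (p-1)"
        using elim by (simp add: divide_right_mono)
      also have "\<dots> = ?l d + real_of_int ?E / real d ^ (p-1)" using d by (simp add: add_divide_distrib)
      also have "real_of_int ?E / real d ^ (p-1) = ?e d"
      proof (cases "p = 1")
        case True then show ?thesis by simp
      next
        case False
        then have pp: "p - 1 = Suc (p - 2)" using p by simp
        have eq: "real_of_int ?E = ?C * real d ^ (p-2)" using False d by simp
        have pw: "real d ^ (p-1) = real d * real d ^ (p-2)" using pp by simp
        have dpos: "real d ^ (p-2) > 0" "real d > 0" using elim by simp_all
        have "real_of_int ?E / real d ^ (p-1) = ?C * real d ^ (p-2) / (real d * real d ^ (p-2))"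
          unfolding eq pw by (rule refl)
        also have "\<dots> = ?C * (1 / real d)" using dpos by (simp add: field_simps)
        also have "\<dots> = ?e d" using False by simp
        finally show ?thesis .
      qed
      finally show ?case .
    qed
  qed
qed

end
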